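(* Let $\{\Psi_j\}_{j\in\mathbb{N}}$ be a sequence of measure-preserving bijections $\Psi_j:\mathbb{T}^d\to\mathbb{T}^d$. Suppose $\{\Psi_{j_k}\}_{k\in\mathbb{N}}$ is a subsequence and $\{\nu^x\}_{x\in\mathbb{T}^d}$ is a family of probability measures on $\mathbb{T}^d$ (with $\nu^x(\mathbb{T}^d)=1$ for a.e. $x$) such that \[\rho\circ\Psi_{j_k}\rightharpoonup\langle\nu^x,\rho\rangle\quad\text{weakly in }L^2(\mathbb{T}^d)\] for every $\rho\in C(\mathbb{T}^d)$. Then the same weak convergence $\rho\circ\Psi_{j_k}\rightharpoonup\langle\nu^x,\rho\rangle$ in $L^2(\mathbb{T}^d)$ holds for every $\rho\in L^\infty(\mathbb{T}^d)$.
   Context: $\mathbb{T}^d$ is the $d$-dimensional torus ($d\ge2$) with Lebesgue measure $\mu$; a measure-preserving bijection is a bijection $\Psi$ with $\mu(\Psi^{-1}(D))=\mu(D)$ for all Lebesgue measurable $D$ (equivalently $\mu(\Psi(D))=\mu(D)$). The notation $\langle\nu^x,\rho\rangle$ denotes the function $x\mapsto\int_{\mathbb{T}^d}\rho(y)\,d\nu^x(y)$. (Such a subsequence and family always exist by Ball's fundamental theorem of Young measures.) *)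

theory Defs
  imports "HOL-Probability.Probability"
begin

text \<open>The torus T^d is modelled by its fundamental domain, the half-open unit cube
  [0,1)^d in real^'d, with Lebesgue measure restricted to it.\<close>

definition torus :: "(real ^ 'd) set" where
  "torus = {x. \<forall>i. 0 \<le> x $ i \<and> x $ i < 1}"

abbreviation torus_measure :: "(real ^ 'd) measure" where
  "torus_measure \<equiv> lebesgue_on torus"

definition torus_continuous :: "(real ^ 'd \<Rightarrow> real) \<Rightarrow> bool" where
  "torus_continuous \<rho> \<longleftrightarrow>
     (\<exists>f. continuous_on UNIV f \<and> (\<forall>x i. f (x + axis i 1) = f x) \<and> (\<forall>x\<in>torus. \<rho> x = f x))"

definition measure_preserving_bij :: "(real ^ 'd \<Rightarrow> real ^ 'd) \<Rightarrow> bool" where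
  "measure_preserving_bij \<Psi> \<longleftrightarrow>
     bij_betw \<Psi> torus torus \<and>
     (\<forall>D \<in> sets (torus_measure :: (real ^ 'd) measure).
        \<Psi> -` D \<inter> torus \<in> sets torus_measure \<and>
        measure torus_measure (\<Psi> -` D \<inter> torus) = measure torus_measure D)"

definition L2_torus :: "(real ^ 'd \<Rightarrow> real) \<Rightarrow> bool" where
  "L2_torus g \<longleftrightarrow> g \<in> borel_measurable (torus_measure :: (real ^ 'd) measure)
                   \<and> integrable torus_measure (\<lambda>x. (g x)^2)"

definition weak_L2_conv :: "(nat \<Rightarrow> real ^ 'd \<Rightarrow> real) \<Rightarrow> (real ^ 'd \<Rightarrow> real) \<Rightarrow> bool" where
  "weak_L2_conv f l \<longleftrightarrow>
     (\<forall>k. L2_torus (f k)) \<and> L2_torus l \<and>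
     (\<forall>g. L2_torus g \<longrightarrow>
        (\<lambda>k. \<integral>x. f k x * g x \<partial>torus_measure) \<longlonglongrightarrow> (\<integral>x. l x * g x \<partial>torus_measure))"

definition young_pair :: "(real ^ 'd \<Rightarrow> (real ^ 'd) measure) \<Rightarrow> (real ^ 'd \<Rightarrow> real) \<Rightarrow> real ^ 'd \<Rightarrow> real" where
  "young_pair \<nu> \<rho> x = (\<integral>y. \<rho> y \<partial>(\<nu> x))"

end

theory Submission
  imports Defs
begin


lemma torus_borel[measurable]: "(torus :: (real^'d) set) \<in> sets borel"
  unfolding torus_def by measurable

lemma torus_leb[measurable]: "(torus :: (real^'d) set) \<in> sets lebesgue"
  by simp

lemma torus_bounded: "bounded (torus :: (real^'d) set)"
proof -
  have "torus \<subseteq> cbox (0::real^'d) 1" unfolding torus_def by (auto simp: mem_box_cart less_imp_le)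
  then show ?thesis using bounded_cbox bounded_subset by blast
qed

lemma finite_torus: "finite_measure (lebesgue_on (torus :: (real^'d) set))"
  by (rule finite_measure_lebesgue_on) (simp add: bounded_set_imp_lmeasurable torus_bounded)

lemma space_torus[simp]: "space (lebesgue_on (torus :: (real^'d) set)) = torus"
  by simp

lemma borel_lebesgue_on: "(f :: real^'d \<Rightarrow> real) \<in> borel_measurable borel \<Longrightarrow> f \<in> borel_measurable (lebesgue_on S)"
  by (simp add: measurable_completion measurable_restrict_space1)

lemma ae_measurable:
  fixes f g :: "real^'d \<Rightarrow> real"
  assumes f: "f \<in> borel_measurable (lebesgue_on torus)" 
    and ae: "AE x in lebesgue_on torus. f x = g x"
  shows "g \<in> borel_measurable (lebesgue_on torus)"
proof -
  have t: "torus \<inter> space lebesgue \<in> sets lebesgue" by simp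
  have "(\<lambda>x. indicator torus x *\<^sub>R f x) \<in> borel_measurable lebesgue"
    using f borel_measurable_restrict_space_iff[OF t] by blast
  moreover have "AE x in lebesgue. indicator torus x *\<^sub>R f x = indicator torus x *\<^sub>R g x"
    using ae unfolding AE_restrict_space_iff[OF t] by eventually_elim (auto simp: indicator_def)
  ultimately have "(\<lambda>x. indicator torus x *\<^sub>R g x) \<in> borel_measurable lebesgue"
    by (rule borel_measurable_AE)
  then show ?thesis using borel_measurable_restrict_space_iff[OF t] by blast
qed

lemma approx_lim:
  fixes a :: "nat \<Rightarrow> real" and a' :: "nat \<Rightarrow> nat \<Rightarrow> real"
  assumes "\<And>n. (\<lambda>k. a' n k) \<longlonglongrightarrow> L' n" and "L' \<longlonglongrightarrow> L"
    and "\<And>e. e > 0 \<Longrightarrow> \<exists>N. \<forall>n\<ge>N. \<forall>k. \<bar>a k - a' n k\<bar> \<le> e"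
  shows "a \<longlonglongrightarrow> L"
proof (rule LIMSEQ_I)
  fix r :: real assume r: "r > 0"
  obtain N where N: "\<forall>n\<ge>N. \<forall>k. \<bar>a k - a' n k\<bar> \<le> r/3" using assms(3)[of "r/3"] r by auto
  obtain N2 where N2: "\<forall>n\<ge>N2. norm (L' n - L) < r/3" using LIMSEQ_D[OF assms(2), of "r/3"] r by auto
  define n where "n = max N N2"
  obtain K where K: "\<forall>k\<ge>K. norm (a' n k - L' n) < r/3" using LIMSEQ_D[OF assms(1)[of n], of "r/3"] r by auto
  have "\<forall>k\<ge>K. norm (a k - L) < r"
  proof (intro allI impI)
    fix k assume "k \<ge> K"
    then have "\<bar>a' n k - L' n\<bar> < r/3" using K by auto
    moreover have "\<bar>L' n - L\<bar> < r/3" using N2 n_def by auto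
    moreover have "\<bar>a k - a' n k\<bar> \<le> r/3" using N n_def by auto
    ultimately show "norm (a k - L) < r" by (simp add: abs_if split: if_splits; linarith)
  qed
  then show "\<exists>no. \<forall>k\<ge>no. norm (a k - L) < r" by blast
qed

definition cper :: "(real^'d \<Rightarrow> real) \<Rightarrow> bool" where
  "cper \<phi> \<longleftrightarrow> continuous_on UNIV \<phi> \<and> (\<forall>x i. \<phi> (x + axis i 1) = \<phi> x)"

definition Gen :: "(real^'d) set set" where
  "Gen = {{x\<in>torus. 0 < \<phi> x} | \<phi>. cper \<phi>}"

lemma axis_comp: "(x + axis i 1) $ k = x $ k + (if k = i then 1 else 0)"
  by (simp add: axis_def)

lemma cper_coord:
  assumes "continuous_on UNIV h" "\<And>t. h (t + 1) = h t"
  shows "cper (\<lambda>x::real^'d. h (x $ i))"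
  unfolding cper_def
proof
  show "continuous_on UNIV (\<lambda>x::real^'d. h (x $ i))"
    by (rule continuous_on_compose2[OF assms(1)]) (intro continuous_intros, simp)
  show "\<forall>x k. h ((x + axis k 1) $ i) = h (x $ i)"
    by (auto simp: axis_def assms(2))
qed

lemma cos_per: "cos (2 * pi * (t + 1)) = cos (2 * pi * t)"
  by (simp add: distrib_left)
lemma sin_per: "sin (2 * pi * (t + 1)) = sin (2 * pi * t)"
  by (simp add: distrib_left)

lemma coord_formula:
  assumes "0 \<le> t" "t < 1"
  shows "t = (if 0 \<le> sin (2*pi*t) then arccos (cos (2*pi*t)) / (2*pi) else 1 - arccos (cos (2*pi*t)) / (2*pi))"
proof (cases "t \<le> 1/2")
  case True
  then have "0 \<le> 2*pi*t" "2*pi*t \<le> pi" using assms by auto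
  then show ?thesis using sin_ge_zero arccos_cos by auto
next
  case False
  then have a: "pi < 2*pi*t" "2*pi*t < 2*pi" using assms by auto
  then have "sin (2*pi*t) < 0" by (rule sin_lt_zero)
  moreover have "cos (2*pi*t) = cos (2*pi - 2*pi*t)" by (simp add: cos_diff)
  moreover have "arccos (cos (2*pi - 2*pi*t)) = 2*pi - 2*pi*t" using a by (intro arccos_cos) auto
  ultimately show ?thesis by (auto simp: field_simps)
qed

lemma basis_ax: "(b::real^'d) \<in> Basis \<Longrightarrow> \<exists>i. b = axis i 1"
  unfolding Basis_vec_def by auto

lemma sets_restrict_sub: "sets (restrict_space borel torus) \<subseteq> sigma_sets (torus :: (real^'d) set) Gen"
proof -
  define M where "M = sigma (torus :: (real^'d) set) Gen"
  have GP: "Gen \<subseteq> Pow torus" unfolding Gen_def by auto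
  have sM: "sets M = sigma_sets torus Gen" and spM: "space M = torus"
    unfolding M_def by (rule sets_measure_of[OF GP], rule space_measure_of[OF GP])
  have cpm: "\<phi> \<in> borel_measurable M" if "cper \<phi>" for \<phi>
    unfolding borel_measurable_iff_greater
  proof
    fix a
    have "cper (\<lambda>x. \<phi> x - a)" using that unfolding cper_def by (auto intro!: continuous_on_diff continuous_on_const)
    then have "{x\<in>torus. 0 < \<phi> x - a} \<in> Gen" unfolding Gen_def
      by (intro CollectI exI[of _ "\<lambda>x. \<phi> x - a"]) simp
    moreover have "{w \<in> space M. a < \<phi> w} = {x\<in>torus. 0 < \<phi> x - a}" using spM by auto
    ultimately show "{w \<in> space M. a < \<phi> w} \<in> sets M" using sM by auto
  qed
  have coord: "(\<lambda>x. x $ i) \<in> borel_measurable M" for i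
  proof -
    have c1: "cper (\<lambda>x::real^'d. cos (2*pi*(x$i)))"
      by (rule cper_coord) (intro continuous_intros, simp add: cos_per)
    have c2: "cper (\<lambda>x::real^'d. sin (2*pi*(x$i)))"
      by (rule cper_coord) (intro continuous_intros, simp add: sin_per)
    have c3: "cper (\<lambda>x::real^'d. arccos (cos (2*pi*(x$i))))"
    proof (rule cper_coord)
      show "continuous_on UNIV (\<lambda>t. arccos (cos (2 * pi * t)))"
      proof (rule continuous_on_compose2[OF continuous_on_arccos'])
        show "continuous_on UNIV (\<lambda>t. cos (2 * pi * t))" by (intro continuous_intros)
        show "(\<lambda>t. cos (2 * pi * t)) ` UNIV \<subseteq> {-1..1}" by auto
      qed
    qed (simp add: cos_per)
    have mif: "(\<lambda>x. if 0 \<le> sin (2*pi*(x$i)) then arccos (cos (2*pi*(x$i))) / (2*pi) else 1 - arccos (cos (2*pi*(x$i))) / (2*pi)) \<in> borel_measurable M"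
    proof (rule measurable_If)
      show "(\<lambda>x. arccos (cos (2*pi*(x$i))) / (2*pi)) \<in> borel_measurable M"
        using cpm[OF c3] by (rule borel_measurable_divide) (rule borel_measurable_const)
      show "(\<lambda>x. 1 - arccos (cos (2*pi*(x$i))) / (2*pi)) \<in> borel_measurable M"
        using cpm[OF c3] by (intro borel_measurable_diff borel_measurable_divide) simp_all
      show "{x \<in> space M. 0 \<le> sin (2*pi*(x$i))} \<in> sets M"
        using cpm[OF c2] by (simp add: borel_measurable_iff_ge)
    qed
    have eqx: "\<And>x. x \<in> space M \<Longrightarrow> (if 0 \<le> sin (2*pi*(x$i)) then arccos (cos (2*pi*(x$i))) / (2*pi) else 1 - arccos (cos (2*pi*(x$i))) / (2*pi)) = x $ i"
    proof -
      fix x assume "x \<in> space M"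
      then have "0 \<le> x$i" "x$i < 1" using spM unfolding torus_def by auto
      from coord_formula[OF this] show "(if 0 \<le> sin (2*pi*(x$i)) then arccos (cos (2*pi*(x$i))) / (2*pi) else 1 - arccos (cos (2*pi*(x$i))) / (2*pi)) = x $ i" by (rule sym)
    qed
    show ?thesis by (rule measurable_cong[THEN iffD1, OF eqx mif])
  qed
  have idm: "(\<lambda>x. x) \<in> borel_measurable M"
  proof (rule borel_measurable_euclidean_space[THEN iffD2], rule ballI)
    fix b :: "real^'d" assume "b \<in> Basis"
    then obtain i where b: "b = axis i 1" using basis_ax by blast
    have e: "(\<lambda>x. x \<bullet> b) = (\<lambda>x. x $ i)" unfolding b by (simp add: cart_eq_inner_axis)
    show "(\<lambda>x. x \<bullet> b) \<in> borel_measurable M" unfolding e by (rule coord)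
  qed
  show ?thesis
  proof
    fix A :: "(real^'d) set" assume "A \<in> sets (restrict_space borel torus)"
    then obtain B where B: "B \<in> sets borel" "A = torus \<inter> B" by (auto simp: sets_restrict_space)
    have "(\<lambda>x. x) -` B \<inter> space M \<in> sets M" using measurable_sets[OF idm B(1)] .
    then show "A \<in> sigma_sets torus Gen" using B sM spM by (simp add: Int_commute)
  qed
qed

lemma sq_bound: "\<bar>t::real\<bar> \<le> 1 + t^2"
proof (cases "\<bar>t\<bar> \<le> 1")
  case True
  have "0 \<le> t^2" by simp
  with True show ?thesis by linarith
next
  case False
  then have "\<bar>t\<bar> * 1 \<le> \<bar>t\<bar> * \<bar>t\<bar>" by (intro mult_left_mono) auto
  then show ?thesis by (simp add: power2_eq_square)
qed

lemma amgm: assumes "t > 0" shows "\<bar>h::real\<bar> * \<bar>g\<bar> \<le> t/2 * h^2 + 1/(2*t) * g^2"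
proof -
  have "0 \<le> (t*\<bar>h\<bar> - \<bar>g\<bar>)^2" by simp
  then have "2*t*(\<bar>h\<bar>*\<bar>g\<bar>) \<le> t^2*h^2 + g^2"
    by (simp add: power2_eq_square algebra_simps abs_mult_self_eq)
  then have "\<bar>h\<bar>*\<bar>g\<bar> \<le> (t^2*h^2 + g^2) / (2*t)" using assms
    by (simp add: pos_le_divide_eq mult.commute)
  also have "\<dots> = t/2 * h^2 + 1/(2*t) * g^2" using assms
    by (simp add: field_simps power2_eq_square)
  finally show ?thesis .
qed



lemma L2_integrable:
  assumes "L2_torus g" shows "integrable (lebesgue_on torus) (g :: real^'d \<Rightarrow> real)"
proof -
  have g2: "integrable (lebesgue_on torus) (\<lambda>x. (g x)^2)" and gm: "g \<in> borel_measurable (lebesgue_on torus)"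
    using assms unfolding L2_torus_def by blast+
  have c: "integrable (lebesgue_on torus) (\<lambda>x. (1::real))"
    by (rule finite_measure.integrable_const[OF finite_torus])
  have i: "integrable (lebesgue_on torus) (\<lambda>x. 1 + (g x)^2)"
    by (rule Bochner_Integration.integrable_add[OF c g2])
  have b: "AE x in lebesgue_on torus. norm (g x) \<le> norm (1 + (g x)^2)"
  proof (rule AE_I2)
    fix x
    have "\<bar>g x\<bar> \<le> 1 + (g x)^2" by (rule sq_bound)
    then show "norm (g x) \<le> norm (1 + (g x)^2)" by simp
  qed
  show ?thesis by (rule Bochner_Integration.integrable_bound[OF i gm b])
qed

lemma bounded_mult_integrable:
  fixes f g :: "real^'d \<Rightarrow> real"
  assumes f: "f \<in> borel_measurable (lebesgue_on torus)" and B: "AE x in lebesgue_on torus. \<bar>f x\<bar> \<le> B"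
    and g: "integrable (lebesgue_on torus) g"
  shows "integrable (lebesgue_on torus) (\<lambda>x. f x * g x)"
proof -
  have i: "integrable (lebesgue_on torus) (\<lambda>x. B * g x)" using g by simp
  have m: "(\<lambda>x. f x * g x) \<in> borel_measurable (lebesgue_on torus)" using f g by measurable
  have ae: "AE x in lebesgue_on torus. norm (f x * g x) \<le> norm (B * g x)"
    using B
  proof eventually_elim
    case (elim x)
    then have "\<bar>f x\<bar> * \<bar>g x\<bar> \<le> B * \<bar>g x\<bar>" by (simp add: mult_right_mono)
    moreover have "0 \<le> B" using elim by linarith
    moreover have "norm (f x * g x) = \<bar>f x\<bar> * \<bar>g x\<bar>" by (simp add: abs_mult)
    moreover have "norm (B * g x) = B * \<bar>g x\<bar>" using \<open>0 \<le> B\<close> by (simp add: abs_mult)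
    ultimately show ?case by linarith
  qed
  show ?thesis by (rule Bochner_Integration.integrable_bound[OF i m ae])
qed

locale setting =
  fixes \<Psi> :: "nat \<Rightarrow> real ^ 'd \<Rightarrow> real ^ 'd"
    and j :: "nat \<Rightarrow> nat"
    and \<nu> :: "real ^ 'd \<Rightarrow> (real ^ 'd) measure"
  assumes mpb: "\<And>n. measure_preserving_bij (\<Psi> n)"
    and nu_sets: "\<And>x. x \<in> torus \<Longrightarrow> sets (\<nu> x) = sets (restrict_space borel torus)"
    and nu_prob: "AE x in lebesgue_on torus. prob_space (\<nu> x)"
    and conv_cont: "\<And>\<rho>. torus_continuous \<rho> \<Longrightarrow>
                      weak_L2_conv (\<lambda>k. \<rho> \<circ> \<Psi> (j k)) (young_pair \<nu> \<rho>)"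
begin

abbreviation "mu \<equiv> (lebesgue_on torus :: (real^'d) measure)"

lemma fin_mu: "finite_measure mu" by (rule finite_torus)

lemma Psi_torus: "x \<in> torus \<Longrightarrow> \<Psi> n x \<in> torus"
  using mpb[of n] unfolding measure_preserving_bij_def bij_betw_def by auto

lemma Psi_meas: "\<Psi> n \<in> measurable mu mu"
proof (rule measurableI)
  show "x \<in> space mu \<Longrightarrow> \<Psi> n x \<in> space mu" for x using Psi_torus by simp
  show "A \<in> sets mu \<Longrightarrow> \<Psi> n -` A \<inter> space mu \<in> sets mu" for A
    using mpb[of n] unfolding measure_preserving_bij_def by simp
qed

lemma distr_Psi: "distr mu mu (\<Psi> n) = mu"
proof (rule measure_eqI)
  show "sets (distr mu mu (\<Psi> n)) = sets mu" by simp
  fix A assume A: "A \<in> sets (distr mu mu (\<Psi> n))"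
  then have A': "A \<in> sets mu" by simp
  have "emeasure (distr mu mu (\<Psi> n)) A = emeasure mu (\<Psi> n -` A \<inter> space mu)"
    by (rule emeasure_distr[OF Psi_meas A'])
  also have "\<dots> = ennreal (measure mu (\<Psi> n -` A \<inter> space mu))"
    by (rule finite_measure.emeasure_eq_measure[OF fin_mu])
  also have "\<dots> = ennreal (measure mu A)"
  proof -
    have "\<forall>D \<in> sets mu. \<Psi> n -` D \<inter> torus \<in> sets mu \<and> measure mu (\<Psi> n -` D \<inter> torus) = measure mu D"
      using mpb[of n] unfolding measure_preserving_bij_def by blast
    then have "measure mu (\<Psi> n -` A \<inter> torus) = measure mu A" using A' by blast
    then show ?thesis by simp
  qed
  also have "\<dots> = emeasure mu A"
    by (rule finite_measure.emeasure_eq_measure[OF fin_mu, symmetric])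
  finally show "emeasure (distr mu mu (\<Psi> n)) A = emeasure mu A" .
qed

lemma int_Psi: "(f :: real^'d \<Rightarrow> real) \<in> borel_measurable mu \<Longrightarrow> (\<integral>x. f (\<Psi> n x) \<partial>mu) = (\<integral>x. f x \<partial>mu)"
  using integral_distr[OF Psi_meas, of f n] distr_Psi by simp

lemma space_nu: "x \<in> torus \<Longrightarrow> space (\<nu> x) = torus"
  using sets_eq_imp_space_eq[OF nu_sets[of x]] by (simp add: space_restrict_space)

lemma meas_nu: "x \<in> torus \<Longrightarrow> (\<rho> :: real^'d \<Rightarrow> real) \<in> borel_measurable borel \<Longrightarrow> \<rho> \<in> borel_measurable (\<nu> x)"
proof -
  assume x: "x \<in> torus" and r: "\<rho> \<in> borel_measurable borel"
  have "\<rho> \<in> borel_measurable (restrict_space borel torus)" using r by (rule measurable_restrict_space1)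
  then show ?thesis by (subst measurable_cong_sets[OF nu_sets[OF x] refl])
qed

lemma ae_good: "AE x in mu. x \<in> torus \<and> prob_space (\<nu> x)"
proof -
  have "AE x in mu. x \<in> space mu" by (rule AE_space)
  then show ?thesis using nu_prob by eventually_elim simp
qed

lemma nu_integrable:
  fixes \<rho> :: "real^'d \<Rightarrow> real" and B :: real
  assumes "x \<in> torus" "prob_space (\<nu> x)" "\<rho> \<in> borel_measurable borel" "\<forall>y\<in>torus. \<bar>\<rho> y\<bar> \<le> B"
  shows "integrable (\<nu> x) \<rho>"
proof -
  interpret prob_space "\<nu> x" by fact
  show ?thesis
  proof (rule integrable_const_bound[of _ B])
    show "AE y in \<nu> x. norm (\<rho> y) \<le> B"
      by (rule AE_I2) (simp add: space_nu[OF assms(1)] assms(4))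
    show "\<rho> \<in> borel_measurable (\<nu> x)" by (rule meas_nu[OF assms(1,3)])
  qed
qed

lemma yp_bound:
  fixes \<rho> :: "real^'d \<Rightarrow> real" and B :: real
  assumes "x \<in> torus" "prob_space (\<nu> x)" "\<rho> \<in> borel_measurable borel" "\<forall>y\<in>torus. \<bar>\<rho> y\<bar> \<le> B"
  shows "\<bar>young_pair \<nu> \<rho> x\<bar> \<le> B"
proof -
  interpret prob_space "\<nu> x" by fact
  have "\<bar>young_pair \<nu> \<rho> x\<bar> \<le> (\<integral>y. B \<partial>(\<nu> x))"
    unfolding young_pair_def
  proof (rule integral_abs_bound_integral)
    show "integrable (\<nu> x) \<rho>" by (rule nu_integrable[OF assms])
    show "integrable (\<nu> x) (\<lambda>y. B)" by simp
    show "\<And>y. y \<in> space (\<nu> x) \<Longrightarrow> \<bar>\<rho> y\<bar> \<le> B" by (simp add: space_nu[OF assms(1)] assms(4))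
  qed
  also have "\<dots> = B" using prob_space by simp
  finally show ?thesis .
qed

end


lemma sq_le: assumes "\<bar>a::real\<bar> \<le> B" shows "norm (a^2) \<le> B^2"
proof -
  have "\<bar>a\<bar>^2 \<le> B^2" by (rule power_mono[OF assms abs_ge_zero])
  then show ?thesis by simp
qed

context setting begin

definition good :: "(real^'d \<Rightarrow> real) \<Rightarrow> bool" where
  "good \<rho> \<longleftrightarrow> \<rho> \<in> borel_measurable borel \<and> (\<exists>B. \<forall>x\<in>torus. \<bar>\<rho> x\<bar> \<le> B) \<and>
     young_pair \<nu> \<rho> \<in> borel_measurable mu \<and>
     (\<forall>g. L2_torus g \<longrightarrow> (\<lambda>k. \<integral>x. \<rho> (\<Psi> (j k) x) * g x \<partial>mu) \<longlonglongrightarrow> (\<integral>x. young_pair \<nu> \<rho> x * g x \<partial>mu))"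

lemma comp_meas: "(\<rho> :: real^'d \<Rightarrow> real) \<in> borel_measurable borel \<Longrightarrow> (\<lambda>x. \<rho> (\<Psi> n x)) \<in> borel_measurable mu"
proof -
  assume r: "\<rho> \<in> borel_measurable borel"
  show ?thesis by (rule measurable_compose[OF Psi_meas borel_lebesgue_on[OF r]])
qed

lemma yp_ae_bound:
  fixes \<rho> :: "real^'d \<Rightarrow> real"
  assumes "\<rho> \<in> borel_measurable borel" "\<forall>y\<in>torus. \<bar>\<rho> y\<bar> \<le> B"
  shows "AE x in mu. \<bar>young_pair \<nu> \<rho> x\<bar> \<le> B"
  using ae_good
proof eventually_elim
  case (elim x)
  then show ?case using yp_bound[OF _ _ assms] by blast
qed

lemma comp_ae_bound:
  fixes \<rho> :: "real^'d \<Rightarrow> real"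
  assumes "\<forall>y\<in>torus. \<bar>\<rho> y\<bar> \<le> B"
  shows "AE x in mu. \<bar>\<rho> (\<Psi> n x)\<bar> \<le> B"
proof (rule AE_I2)
  fix x assume "x \<in> space mu"
  then have "\<Psi> n x \<in> torus" using Psi_torus by simp
  then show "\<bar>\<rho> (\<Psi> n x)\<bar> \<le> B" using assms by blast
qed

lemma L2_bounded:
  fixes f :: "real^'d \<Rightarrow> real"
  assumes "f \<in> borel_measurable mu" "AE x in mu. \<bar>f x\<bar> \<le> B"
  shows "L2_torus f"
  unfolding L2_torus_def
proof
  show "f \<in> borel_measurable mu" by fact
  have m: "(\<lambda>x. (f x)^2) \<in> borel_measurable mu" using assms(1) by measurable
  have "AE x in mu. norm ((f x)^2) \<le> B^2" using assms(2)
    by eventually_elim (rule sq_le)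
  then show "integrable mu (\<lambda>x. (f x)^2)"
    by (rule finite_measure.integrable_const_bound[OF fin_mu _ m])
qed

lemma G_final:
  assumes "good \<rho>"
  shows "weak_L2_conv (\<lambda>k. \<rho> \<circ> \<Psi> (j k)) (young_pair \<nu> \<rho>)"
proof -
  obtain B where B: "\<forall>x\<in>torus. \<bar>\<rho> x\<bar> \<le> B" using assms unfolding good_def by blast
  have rb: "\<rho> \<in> borel_measurable borel" using assms unfolding good_def by blast
  have ym: "young_pair \<nu> \<rho> \<in> borel_measurable mu" using assms unfolding good_def by blast
  have cv: "\<forall>g. L2_torus g \<longrightarrow> (\<lambda>k. \<integral>x. \<rho> (\<Psi> (j k) x) * g x \<partial>mu) \<longlonglongrightarrow> (\<integral>x. young_pair \<nu> \<rho> x * g x \<partial>mu)"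
    using assms unfolding good_def by blast
  show ?thesis unfolding weak_L2_conv_def
  proof (intro conjI allI impI)
    fix k
    have "(\<lambda>x. \<rho> (\<Psi> (j k) x)) \<in> borel_measurable mu" by (rule comp_meas[OF rb])
    then have "L2_torus (\<lambda>x. \<rho> (\<Psi> (j k) x))" by (rule L2_bounded[OF _ comp_ae_bound[OF B]])
    then show "L2_torus (\<rho> \<circ> \<Psi> (j k))" by (simp add: comp_def)
  next
    show "L2_torus (young_pair \<nu> \<rho>)" by (rule L2_bounded[OF ym yp_ae_bound[OF rb B]])
  next
    fix g :: "real^'d \<Rightarrow> real" assume "L2_torus g"
    then show "(\<lambda>k. \<integral>x. (\<rho> \<circ> \<Psi> (j k)) x * g x \<partial>mu) \<longlonglongrightarrow> (\<integral>x. young_pair \<nu> \<rho> x * g x \<partial>mu)"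
      using cv by (simp add: comp_def)
  qed
qed

end


lemma int_lin:
  fixes f g :: "'a \<Rightarrow> real"
  assumes "integrable M f" "integrable M g"
  shows "(\<integral>x. a * f x + b * g x \<partial>M) = a * integral\<^sup>L M f + b * integral\<^sup>L M g"
proof -
  have "(\<integral>x. a * f x + b * g x \<partial>M) = (\<integral>x. a * f x \<partial>M) + (\<integral>x. b * g x \<partial>M)"
    by (rule Bochner_Integration.integral_add) (use assms in auto)
  then show ?thesis by simp
qed

lemma bound_lin:
  fixes a b x y B1 B2 :: real
  assumes "\<bar>x\<bar> \<le> B1" "\<bar>y\<bar> \<le> B2"
  shows "\<bar>a * x + b * y\<bar> \<le> \<bar>a\<bar> * B1 + \<bar>b\<bar> * B2"
proof -
  have "\<bar>a * x + b * y\<bar> \<le> \<bar>a\<bar> * \<bar>x\<bar> + \<bar>b\<bar> * \<bar>y\<bar>" by (metis abs_mult abs_triangle_ineq)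
  also have "\<dots> \<le> \<bar>a\<bar> * B1 + \<bar>b\<bar> * B2"
    by (intro add_mono mult_left_mono assms abs_ge_zero)
  finally show ?thesis .
qed

context setting begin

lemma G_cper:
  assumes "cper \<phi>"
  shows "good \<phi>"
proof -
  have c: "continuous_on UNIV \<phi>" and per: "\<forall>x i. \<phi> (x + axis i 1) = \<phi> x" using assms unfolding cper_def by blast+
  have rb: "\<phi> \<in> borel_measurable borel" by (rule borel_measurable_continuous_onI[OF c])
  have "compact (\<phi> ` cbox 0 1)" by (rule compact_continuous_image[OF continuous_on_subset[OF c]]) auto
  then obtain B where B0: "\<forall>y\<in>\<phi> ` cbox 0 1. norm y \<le> B" using compact_imp_bounded bounded_iff by metis
  have sub: "torus \<subseteq> cbox (0::real^'d) 1" unfolding torus_def by (auto simp: mem_box_cart less_imp_le)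
  have B: "\<forall>x\<in>torus. \<bar>\<phi> x\<bar> \<le> B" using B0 sub by auto
  have tc: "torus_continuous \<phi>" unfolding torus_continuous_def using c per by blast
  have w: "weak_L2_conv (\<lambda>k. \<phi> \<circ> \<Psi> (j k)) (young_pair \<nu> \<phi>)" by (rule conv_cont[OF tc])
  have ym: "young_pair \<nu> \<phi> \<in> borel_measurable mu" using w unfolding weak_L2_conv_def L2_torus_def by blast
  have cv: "\<forall>g. L2_torus g \<longrightarrow> (\<lambda>k. \<integral>x. (\<phi> \<circ> \<Psi> (j k)) x * g x \<partial>mu) \<longlonglongrightarrow> (\<integral>x. young_pair \<nu> \<phi> x * g x \<partial>mu)"
    using w unfolding weak_L2_conv_def by blast
  show ?thesis unfolding good_def using rb B ym cv by (auto simp: comp_def)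
qed

lemma G_lin:
  assumes g1: "good \<rho>1" and g2: "good \<rho>2"
  shows "good (\<lambda>x. a * \<rho>1 x + b * \<rho>2 x)"
proof -
  obtain B1 where B1: "\<forall>x\<in>torus. \<bar>\<rho>1 x\<bar> \<le> B1" using g1 unfolding good_def by blast
  have rb1: "\<rho>1 \<in> borel_measurable borel" using g1 unfolding good_def by blast
  have ym1: "young_pair \<nu> \<rho>1 \<in> borel_measurable mu" using g1 unfolding good_def by blast
  have cv1: "\<And>g. L2_torus g \<Longrightarrow> (\<lambda>k. \<integral>x. \<rho>1 (\<Psi> (j k) x) * g x \<partial>mu) \<longlonglongrightarrow> (\<integral>x. young_pair \<nu> \<rho>1 x * g x \<partial>mu)"
    using g1 unfolding good_def by blast
  obtain B2 where B2: "\<forall>x\<in>torus. \<bar>\<rho>2 x\<bar> \<le> B2" using g2 unfolding good_def by blast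
  have rb2: "\<rho>2 \<in> borel_measurable borel" using g2 unfolding good_def by blast
  have ym2: "young_pair \<nu> \<rho>2 \<in> borel_measurable mu" using g2 unfolding good_def by blast
  have cv2: "\<And>g. L2_torus g \<Longrightarrow> (\<lambda>k. \<integral>x. \<rho>2 (\<Psi> (j k) x) * g x \<partial>mu) \<longlonglongrightarrow> (\<integral>x. young_pair \<nu> \<rho>2 x * g x \<partial>mu)"
    using g2 unfolding good_def by blast
  define \<rho> where "\<rho> = (\<lambda>x. a * \<rho>1 x + b * \<rho>2 x)"
  have rb: "\<rho> \<in> borel_measurable borel" unfolding \<rho>_def using rb1 rb2 by measurable
  have B: "\<forall>x\<in>torus. \<bar>\<rho> x\<bar> \<le> \<bar>a\<bar> * B1 + \<bar>b\<bar> * B2"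
    unfolding \<rho>_def using B1 B2 bound_lin by blast
  have yeq: "AE x in mu. a * young_pair \<nu> \<rho>1 x + b * young_pair \<nu> \<rho>2 x = young_pair \<nu> \<rho> x"
    using ae_good
  proof eventually_elim
    case (elim x)
    have i1: "integrable (\<nu> x) \<rho>1" by (rule nu_integrable[OF _ _ rb1 B1]) (use elim in blast)+
    have i2: "integrable (\<nu> x) \<rho>2" by (rule nu_integrable[OF _ _ rb2 B2]) (use elim in blast)+
    show ?case unfolding young_pair_def \<rho>_def by (rule int_lin[OF i1 i2, symmetric])
  qed
  have ym0: "(\<lambda>x. a * young_pair \<nu> \<rho>1 x + b * young_pair \<nu> \<rho>2 x) \<in> borel_measurable mu"
    using ym1 ym2 by measurable
  have ym: "young_pair \<nu> \<rho> \<in> borel_measurable mu" by (rule ae_measurable[OF ym0 yeq])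
  have cv: "(\<lambda>k. \<integral>x. \<rho> (\<Psi> (j k) x) * g x \<partial>mu) \<longlonglongrightarrow> (\<integral>x. young_pair \<nu> \<rho> x * g x \<partial>mu)"
    if gL: "L2_torus g" for g
  proof -
    have gi: "integrable mu g" by (rule L2_integrable[OF gL])
    have e1: "(\<integral>x. \<rho> (\<Psi> (j k) x) * g x \<partial>mu) =
       a * (\<integral>x. \<rho>1 (\<Psi> (j k) x) * g x \<partial>mu) + b * (\<integral>x. \<rho>2 (\<Psi> (j k) x) * g x \<partial>mu)" for k
    proof -
      have i1: "integrable mu (\<lambda>x. \<rho>1 (\<Psi> (j k) x) * g x)"
        by (rule bounded_mult_integrable[OF comp_meas[OF rb1] comp_ae_bound[OF B1] gi])
      have i2: "integrable mu (\<lambda>x. \<rho>2 (\<Psi> (j k) x) * g x)"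
        by (rule bounded_mult_integrable[OF comp_meas[OF rb2] comp_ae_bound[OF B2] gi])
      have "(\<lambda>x. \<rho> (\<Psi> (j k) x) * g x) = (\<lambda>x. a * (\<rho>1 (\<Psi> (j k) x) * g x) + b * (\<rho>2 (\<Psi> (j k) x) * g x))"
        unfolding \<rho>_def by (simp add: algebra_simps)
      then show ?thesis using int_lin[OF i1 i2] by simp
    qed
    have e2: "(\<integral>x. young_pair \<nu> \<rho> x * g x \<partial>mu) =
       a * (\<integral>x. young_pair \<nu> \<rho>1 x * g x \<partial>mu) + b * (\<integral>x. young_pair \<nu> \<rho>2 x * g x \<partial>mu)"
    proof -
      have i1: "integrable mu (\<lambda>x. young_pair \<nu> \<rho>1 x * g x)"
        by (rule bounded_mult_integrable[OF ym1 yp_ae_bound[OF rb1 B1] gi])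
      have i2: "integrable mu (\<lambda>x. young_pair \<nu> \<rho>2 x * g x)"
        by (rule bounded_mult_integrable[OF ym2 yp_ae_bound[OF rb2 B2] gi])
      have "(\<integral>x. young_pair \<nu> \<rho> x * g x \<partial>mu) = (\<integral>x. a * (young_pair \<nu> \<rho>1 x * g x) + b * (young_pair \<nu> \<rho>2 x * g x) \<partial>mu)"
      proof (rule integral_cong_AE)
        show "(\<lambda>x. young_pair \<nu> \<rho> x * g x) \<in> borel_measurable mu" using ym gi by measurable
        show "(\<lambda>x. a * (young_pair \<nu> \<rho>1 x * g x) + b * (young_pair \<nu> \<rho>2 x * g x)) \<in> borel_measurable mu"
          using ym1 ym2 gi by measurable
        show "AE x in mu. young_pair \<nu> \<rho> x * g x = a * (young_pair \<nu> \<rho>1 x * g x) + b * (young_pair \<nu> \<rho>2 x * g x)"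
          using yeq
        proof eventually_elim
          case (elim x)
          then show ?case by (simp add: algebra_simps flip: elim)
        qed
      qed
      then show ?thesis using int_lin[OF i1 i2] by simp
    qed
    show ?thesis unfolding e1 e2
      by (intro tendsto_add tendsto_mult_left cv1 cv2 gL)
  qed
  show ?thesis unfolding good_def \<rho>_def[symmetric] using rb B ym cv by blast
qed

end


context setting begin

lemma G_cong:
  assumes g: "good \<rho>" and rb': "\<rho>' \<in> borel_measurable borel" and eq: "\<forall>x\<in>torus. \<rho>' x = \<rho> x"
  shows "good \<rho>'"
proof -
  obtain B where B: "\<forall>x\<in>torus. \<bar>\<rho> x\<bar> \<le> B" using g unfolding good_def by blast
  have ym: "young_pair \<nu> \<rho> \<in> borel_measurable mu" using g unfolding good_def by blast
  have cv: "\<And>g. L2_torus g \<Longrightarrow> (\<lambda>k. \<integral>x. \<rho> (\<Psi> (j k) x) * g x \<partial>mu) \<longlonglongrightarrow> (\<integral>x. young_pair \<nu> \<rho> x * g x \<partial>mu)"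
    using g unfolding good_def by blast
  have B': "\<forall>x\<in>torus. \<bar>\<rho>' x\<bar> \<le> B" using B eq by simp
  have yeq: "young_pair \<nu> \<rho>' x = young_pair \<nu> \<rho> x" if x: "x \<in> space mu" for x
    unfolding young_pair_def
  proof (rule Bochner_Integration.integral_cong[OF refl])
    fix y assume "y \<in> space (\<nu> x)"
    then have "y \<in> torus" using space_nu x by simp
    then show "\<rho>' y = \<rho> y" using eq by blast
  qed
  have ym': "young_pair \<nu> \<rho>' \<in> borel_measurable mu"
    using ym measurable_cong[of mu "young_pair \<nu> \<rho>'" "young_pair \<nu> \<rho>"] yeq by blast
  have cv': "(\<lambda>k. \<integral>x. \<rho>' (\<Psi> (j k) x) * g x \<partial>mu) \<longlonglongrightarrow> (\<integral>x. young_pair \<nu> \<rho>' x * g x \<partial>mu)"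
    if gL: "L2_torus g" for g
  proof -
    have e1: "(\<integral>x. \<rho>' (\<Psi> (j k) x) * g x \<partial>mu) = (\<integral>x. \<rho> (\<Psi> (j k) x) * g x \<partial>mu)" for k
    proof (rule Bochner_Integration.integral_cong[OF refl])
      fix x assume "x \<in> space mu"
      then have "\<Psi> (j k) x \<in> torus" using Psi_torus by simp
      then show "\<rho>' (\<Psi> (j k) x) * g x = \<rho> (\<Psi> (j k) x) * g x" using eq by simp
    qed
    have e2: "(\<integral>x. young_pair \<nu> \<rho>' x * g x \<partial>mu) = (\<integral>x. young_pair \<nu> \<rho> x * g x \<partial>mu)"
      by (rule Bochner_Integration.integral_cong[OF refl]) (simp add: yeq)
    show ?thesis unfolding e1 e2 by (rule cv[OF gL])
  qed
  show ?thesis unfolding good_def using rb' B' ym' cv' by blast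
qed

end


context setting begin

lemma yp_lim:
  fixes \<rho>s :: "nat \<Rightarrow> real^'d \<Rightarrow> real"
  assumes rbs: "\<And>n. \<rho>s n \<in> borel_measurable borel" and rb: "\<rho> \<in> borel_measurable borel"
    and Bs: "\<And>n. \<forall>x\<in>torus. \<bar>\<rho>s n x\<bar> \<le> B"
    and lim: "\<And>x. x \<in> torus \<Longrightarrow> (\<lambda>n. \<rho>s n x) \<longlonglongrightarrow> \<rho> x"
  shows "AE x in mu. (\<lambda>n. young_pair \<nu> (\<rho>s n) x) \<longlonglongrightarrow> young_pair \<nu> \<rho> x"
  using ae_good
proof eventually_elim
  case (elim x)
  then have x: "x \<in> torus" and P: "prob_space (\<nu> x)" by blast+
  interpret prob_space "\<nu> x" by (rule P)
  show ?case unfolding young_pair_def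
  proof (rule integral_dominated_convergence[where w="\<lambda>_. B"])
    show "\<rho> \<in> borel_measurable (\<nu> x)" by (rule meas_nu[OF x rb])
    show "\<And>i. \<rho>s i \<in> borel_measurable (\<nu> x)" by (rule meas_nu[OF x rbs])
    show "integrable (\<nu> x) (\<lambda>_. B)" by (rule integrable_const)
    show "AE y in \<nu> x. (\<lambda>i. \<rho>s i y) \<longlonglongrightarrow> \<rho> y"
    proof (rule AE_I2)
      fix y assume "y \<in> space (\<nu> x)"
      then have "y \<in> torus" using space_nu[OF x] by simp
      then show "(\<lambda>i. \<rho>s i y) \<longlonglongrightarrow> \<rho> y" by (rule lim)
    qed
    show "AE y in \<nu> x. norm (\<rho>s i y) \<le> B" for i
    proof (rule AE_I2)
      fix y assume "y \<in> space (\<nu> x)"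
      then have "y \<in> torus" using space_nu[OF x] by simp
      then show "norm (\<rho>s i y) \<le> B" using Bs[of i] by simp
    qed
  qed
qed

lemma uniform_est:
  fixes \<rho>s :: "nat \<Rightarrow> real^'d \<Rightarrow> real" and g \<rho> :: "real^'d \<Rightarrow> real"
  assumes rbs: "\<And>n. \<rho>s n \<in> borel_measurable borel" and rb: "\<rho> \<in> borel_measurable borel"
    and Bs: "\<And>n. \<forall>x\<in>torus. \<bar>\<rho>s n x\<bar> \<le> B" and B: "\<forall>x\<in>torus. \<bar>\<rho> x\<bar> \<le> B"
    and gL: "L2_torus g" and t: "t > 0"
  shows "\<bar>(\<integral>x. \<rho> (\<Psi> m x) * g x \<partial>mu) - (\<integral>x. \<rho>s n (\<Psi> m x) * g x \<partial>mu)\<bar>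
      \<le> t/2 * (\<integral>x. (\<rho> x - \<rho>s n x)^2 \<partial>mu) + 1/(2*t) * (\<integral>x. (g x)^2 \<partial>mu)"
proof -
  define h where "h = (\<lambda>x. \<rho> x - \<rho>s n x)"
  have hb: "h \<in> borel_measurable borel" unfolding h_def using rb rbs[of n] by measurable
  have hB: "\<forall>x\<in>torus. \<bar>h x\<bar> \<le> 2*B"
  proof
    fix x :: "real^'d" assume "x \<in> torus"
    then have "\<bar>\<rho> x\<bar> \<le> B" "\<bar>\<rho>s n x\<bar> \<le> B" using B Bs[of n] by blast+
    then show "\<bar>h x\<bar> \<le> 2*B" unfolding h_def by linarith
  qed
  have gi: "integrable mu g" by (rule L2_integrable[OF gL])
  have gm: "g \<in> borel_measurable mu" and g2: "integrable mu (\<lambda>x. (g x)^2)" using gL unfolding L2_torus_def by blast+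
  have i1: "integrable mu (\<lambda>x. \<rho> (\<Psi> m x) * g x)"
    by (rule bounded_mult_integrable[OF comp_meas[OF rb] comp_ae_bound[OF B] gi])
  have i2: "integrable mu (\<lambda>x. \<rho>s n (\<Psi> m x) * g x)"
    by (rule bounded_mult_integrable[OF comp_meas[OF rbs] comp_ae_bound[OF Bs] gi])
  have hm: "(\<lambda>x. h (\<Psi> m x)) \<in> borel_measurable mu" by (rule comp_meas[OF hb])
  have i3: "integrable mu (\<lambda>x. h (\<Psi> m x) * g x)"
    by (rule bounded_mult_integrable[OF hm comp_ae_bound[OF hB] gi])
  have h2m: "(\<lambda>x. (h (\<Psi> m x))^2) \<in> borel_measurable mu" using hm by measurable
  have i4: "integrable mu (\<lambda>x. (h (\<Psi> m x))^2)"
  proof (rule finite_measure.integrable_const_bound[OF fin_mu _ h2m])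
    show "AE x in mu. norm ((h (\<Psi> m x))^2) \<le> (2*B)^2"
      using comp_ae_bound[OF hB, of m] by eventually_elim (rule sq_le)
  qed
  have "(\<integral>x. \<rho> (\<Psi> m x) * g x \<partial>mu) - (\<integral>x. \<rho>s n (\<Psi> m x) * g x \<partial>mu) = (\<integral>x. h (\<Psi> m x) * g x \<partial>mu)"
  proof -
    have "(\<integral>x. \<rho> (\<Psi> m x) * g x \<partial>mu) - (\<integral>x. \<rho>s n (\<Psi> m x) * g x \<partial>mu)
        = (\<integral>x. \<rho> (\<Psi> m x) * g x - \<rho>s n (\<Psi> m x) * g x \<partial>mu)"
      by (rule Bochner_Integration.integral_diff[OF i1 i2, symmetric])
    also have "\<dots> = (\<integral>x. h (\<Psi> m x) * g x \<partial>mu)"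
      unfolding h_def by (simp add: left_diff_distrib)
    finally show ?thesis .
  qed
  also have "\<bar>\<dots>\<bar> \<le> (\<integral>x. t/2 * (h (\<Psi> m x))^2 + 1/(2*t) * (g x)^2 \<partial>mu)"
  proof (rule integral_abs_bound_integral[OF i3])
    show "integrable mu (\<lambda>x. t/2 * (h (\<Psi> m x))^2 + 1/(2*t) * (g x)^2)"
      using i4 g2 by (intro Bochner_Integration.integrable_add integrable_mult_right)
    fix x
    have "\<bar>h (\<Psi> m x) * g x\<bar> = \<bar>h (\<Psi> m x)\<bar> * \<bar>g x\<bar>" by (rule abs_mult)
    also have "\<dots> \<le> t/2 * (h (\<Psi> m x))^2 + 1/(2*t) * (g x)^2" by (rule amgm[OF t])
    finally show "\<bar>h (\<Psi> m x) * g x\<bar> \<le> t/2 * (h (\<Psi> m x))^2 + 1/(2*t) * (g x)^2" .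
  qed
  also have "\<dots> = t/2 * (\<integral>x. (h (\<Psi> m x))^2 \<partial>mu) + 1/(2*t) * (\<integral>x. (g x)^2 \<partial>mu)"
    by (rule int_lin[OF i4 g2])
  also have "(\<integral>x. (h (\<Psi> m x))^2 \<partial>mu) = (\<integral>x. (h x)^2 \<partial>mu)"
  proof -
    have "(\<lambda>x. (h x)^2) \<in> borel_measurable mu" using borel_lebesgue_on[OF hb] by measurable
    then show ?thesis by (rule int_Psi)
  qed
  finally show ?thesis unfolding h_def .
qed

end


context setting begin

lemma G_lim:
  fixes \<rho>s :: "nat \<Rightarrow> real^'d \<Rightarrow> real" and \<rho> :: "real^'d \<Rightarrow> real"
  assumes gs: "\<And>n. good (\<rho>s n)" and rb: "\<rho> \<in> borel_measurable borel"
    and Bs: "\<And>n. \<forall>x\<in>torus. \<bar>\<rho>s n x\<bar> \<le> B"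
    and lim: "\<And>x. x \<in> torus \<Longrightarrow> (\<lambda>n. \<rho>s n x) \<longlonglongrightarrow> \<rho> x"
  shows "good \<rho>"
proof -
  have rbs: "\<And>n. \<rho>s n \<in> borel_measurable borel" using gs unfolding good_def by blast
  have yms: "\<And>n. young_pair \<nu> (\<rho>s n) \<in> borel_measurable mu" using gs unfolding good_def by blast
  have cvs: "\<And>n g. L2_torus g \<Longrightarrow> (\<lambda>k. \<integral>x. \<rho>s n (\<Psi> (j k) x) * g x \<partial>mu) \<longlonglongrightarrow> (\<integral>x. young_pair \<nu> (\<rho>s n) x * g x \<partial>mu)"
    using gs unfolding good_def by blast
  have B: "\<forall>x\<in>torus. \<bar>\<rho> x\<bar> \<le> B"
  proof
    fix x :: "real^'d" assume x: "x \<in> torus"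
    have "(\<lambda>n. \<bar>\<rho>s n x\<bar>) \<longlonglongrightarrow> \<bar>\<rho> x\<bar>" by (rule tendsto_rabs[OF lim[OF x]])
    moreover have "\<exists>N. \<forall>n\<ge>N. \<bar>\<rho>s n x\<bar> \<le> B" using Bs x by blast
    ultimately show "\<bar>\<rho> x\<bar> \<le> B" by (rule LIMSEQ_le_const2)
  qed
  have ylim: "AE x in mu. (\<lambda>n. young_pair \<nu> (\<rho>s n) x) \<longlonglongrightarrow> young_pair \<nu> \<rho> x"
    by (rule yp_lim[OF rbs rb Bs lim])
  have ym: "young_pair \<nu> \<rho> \<in> borel_measurable mu"
  proof (rule ae_measurable)
    show "(\<lambda>x. lim (\<lambda>n. young_pair \<nu> (\<rho>s n) x)) \<in> borel_measurable mu"
      by (rule borel_measurable_lim_metric[OF yms])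
    show "AE x in mu. lim (\<lambda>n. young_pair \<nu> (\<rho>s n) x) = young_pair \<nu> \<rho> x"
      using ylim by eventually_elim (rule limI)
  qed
  have cv: "(\<lambda>k. \<integral>x. \<rho> (\<Psi> (j k) x) * g x \<partial>mu) \<longlonglongrightarrow> (\<integral>x. young_pair \<nu> \<rho> x * g x \<partial>mu)"
    if gL: "L2_torus g" for g :: "real^'d \<Rightarrow> real"
  proof (rule approx_lim)
    show "\<And>n. (\<lambda>k. \<integral>x. \<rho>s n (\<Psi> (j k) x) * g x \<partial>mu) \<longlonglongrightarrow> (\<integral>x. young_pair \<nu> (\<rho>s n) x * g x \<partial>mu)"
      by (rule cvs[OF gL])
    have gi: "integrable mu g" by (rule L2_integrable[OF gL])
    have gm: "g \<in> borel_measurable mu" and g2: "integrable mu (\<lambda>x. (g x)^2)" using gL unfolding L2_torus_def by blast+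
    show "(\<lambda>n. \<integral>x. young_pair \<nu> (\<rho>s n) x * g x \<partial>mu) \<longlonglongrightarrow> (\<integral>x. young_pair \<nu> \<rho> x * g x \<partial>mu)"
    proof (rule integral_dominated_convergence[where w="\<lambda>x. B * \<bar>g x\<bar>"])
      show "(\<lambda>x. young_pair \<nu> \<rho> x * g x) \<in> borel_measurable mu" using ym gm by measurable
      show "\<And>n. (\<lambda>x. young_pair \<nu> (\<rho>s n) x * g x) \<in> borel_measurable mu" using yms gm by measurable
      show "integrable mu (\<lambda>x. B * \<bar>g x\<bar>)" using gi by (intro integrable_mult_right integrable_abs)
      show "AE x in mu. (\<lambda>n. young_pair \<nu> (\<rho>s n) x * g x) \<longlonglongrightarrow> young_pair \<nu> \<rho> x * g x"
        using ylim by eventually_elim (rule tendsto_mult_right)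
      show "AE x in mu. norm (young_pair \<nu> (\<rho>s n) x * g x) \<le> B * \<bar>g x\<bar>" for n
        using yp_ae_bound[OF rbs Bs, of n]
      proof eventually_elim
        case (elim x)
        then have "\<bar>young_pair \<nu> (\<rho>s n) x\<bar> * \<bar>g x\<bar> \<le> B * \<bar>g x\<bar>" by (rule mult_right_mono) simp
        then show ?case by (simp add: abs_mult)
      qed
    qed
    define H where "H n = (\<integral>x. (\<rho> x - \<rho>s n x)^2 \<partial>mu)" for n
    have H0: "H \<longlonglongrightarrow> 0"
    proof -
      have "(\<lambda>n. \<integral>x. (\<rho> x - \<rho>s n x)^2 \<partial>mu) \<longlonglongrightarrow> (\<integral>x. 0 \<partial>mu)"
      proof (rule integral_dominated_convergence[where w="\<lambda>x. (2*B)^2"])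
        show "(\<lambda>x. 0::real) \<in> borel_measurable mu" by simp
        show "\<And>n. (\<lambda>x. (\<rho> x - \<rho>s n x)^2) \<in> borel_measurable mu"
          using borel_lebesgue_on[OF rb] borel_lebesgue_on[OF rbs] by measurable
        show "integrable mu (\<lambda>x. (2*B)^2)" by (rule finite_measure.integrable_const[OF fin_mu])
        show "AE x in mu. (\<lambda>n. (\<rho> x - \<rho>s n x)^2) \<longlonglongrightarrow> 0"
        proof (rule AE_I2)
          fix x assume "x \<in> space mu"
          then have x: "x \<in> torus" by simp
          have "(\<lambda>n. (\<rho> x - \<rho>s n x)^2) \<longlonglongrightarrow> (\<rho> x - \<rho> x)^2"
            by (intro tendsto_intros lim[OF x])
          then show "(\<lambda>n. (\<rho> x - \<rho>s n x)^2) \<longlonglongrightarrow> 0" by simp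
        qed
        show "AE x in mu. norm ((\<rho> x - \<rho>s n x)^2) \<le> (2*B)^2" for n
        proof (rule AE_I2)
          fix x assume "x \<in> space mu"
          then have x: "x \<in> torus" by simp
          then have "\<bar>\<rho> x\<bar> \<le> B" "\<bar>\<rho>s n x\<bar> \<le> B" using B Bs[of n] by blast+
          then have "\<bar>\<rho> x - \<rho>s n x\<bar> \<le> 2*B" by linarith
          then show "norm ((\<rho> x - \<rho>s n x)^2) \<le> (2*B)^2" by (rule sq_le)
        qed
      qed
      then show ?thesis unfolding H_def by simp
    qed
    define G where "G = (\<integral>x. (g x)^2 \<partial>mu)"
    have G0: "G \<ge> 0" unfolding G_def by (rule integral_nonneg_AE) simp
    show "\<exists>N. \<forall>n\<ge>N. \<forall>k. \<bar>(\<integral>x. \<rho> (\<Psi> (j k) x) * g x \<partial>mu) - (\<integral>x. \<rho>s n (\<Psi> (j k) x) * g x \<partial>mu)\<bar> \<le> e"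
      if e: "e > 0" for e
    proof -
      define t where "t = (G + 1) / e"
      have t: "t > 0" unfolding t_def using G0 e by simp
      have "e / t > 0" using e t by simp
      then obtain N where N: "\<forall>n\<ge>N. norm (H n - 0) < e / t" using LIMSEQ_D[OF H0] by blast
      have "\<bar>(\<integral>x. \<rho> (\<Psi> (j k) x) * g x \<partial>mu) - (\<integral>x. \<rho>s n (\<Psi> (j k) x) * g x \<partial>mu)\<bar> \<le> e"
        if n: "n \<ge> N" for n k
      proof -
        have est: "\<bar>(\<integral>x. \<rho> (\<Psi> (j k) x) * g x \<partial>mu) - (\<integral>x. \<rho>s n (\<Psi> (j k) x) * g x \<partial>mu)\<bar>
          \<le> t/2 * H n + 1/(2*t) * G"
          unfolding H_def G_def by (rule uniform_est[OF rbs rb Bs B gL t])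
        have "\<bar>H n\<bar> < e / t" using N n by simp
        then have "H n < e / t" by linarith
        then have "t * H n \<le> e" using t by (simp add: field_simps)
        then have a1: "t/2 * H n \<le> e/2" by simp
        have "1/(2*t) * G = G * e / (2 * (G + 1))" unfolding t_def using e G0 by (simp add: field_simps)
        also have "\<dots> \<le> e/2"
        proof -
          have "G * e \<le> (G + 1) * e" using e by simp
          then show ?thesis using G0 by (simp add: field_simps)
        qed
        finally have a2: "1/(2*t) * G \<le> e/2" .
        show ?thesis using est a1 a2 by linarith
      qed
      then show ?thesis by blast
    qed
  qed
  show ?thesis unfolding good_def using rb B ym cv by blast
qed

end


lemma Gen_Pow: "Gen \<subseteq> Pow (torus :: (real^'d) set)"
  unfolding Gen_def by auto

lemma cper_min: "cper \<phi> \<Longrightarrow> cper \<psi> \<Longrightarrow> cper (\<lambda>x. min (\<phi> x) (\<psi> x))"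
  unfolding cper_def by (auto intro!: continuous_on_min)

lemma Gen_Int: "Int_stable (Gen :: (real^'d) set set)"
  unfolding Int_stable_def
proof (intro ballI)
  fix a b :: "(real^'d) set" assume "a \<in> Gen" "b \<in> Gen"
  then obtain \<phi> \<psi> where a: "a = {x\<in>torus. 0 < \<phi> x}" "cper \<phi>" and b: "b = {x\<in>torus. 0 < \<psi> x}" "cper \<psi>"
    unfolding Gen_def by blast
  have "a \<inter> b = {x\<in>torus. 0 < min (\<phi> x) (\<psi> x)}" using a b by auto
  moreover have "cper (\<lambda>x. min (\<phi> x) (\<psi> x))" by (rule cper_min[OF a(2) b(2)])
  ultimately show "a \<inter> b \<in> Gen" unfolding Gen_def
    by (intro CollectI exI[of _ "\<lambda>x. min (\<phi> x) (\<psi> x)"]) simp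
qed

lemma cper_borel: "cper \<phi> \<Longrightarrow> \<phi> \<in> borel_measurable borel"
  unfolding cper_def by (blast intro: borel_measurable_continuous_onI)

lemma Gen_borel: "A \<in> sigma_sets (torus :: (real^'d) set) Gen \<Longrightarrow> A \<in> sets borel"
proof (induct rule: sigma_sets.induct)
  case (Basic a)
  then obtain \<phi> where a: "a = {x\<in>torus. 0 < \<phi> x}" "cper \<phi>" unfolding Gen_def by blast
  have [measurable]: "\<phi> \<in> borel_measurable borel" by (rule cper_borel[OF a(2)])
  show ?case unfolding a(1) by measurable
next
  case Empty then show ?case by simp
next
  case (Compl a) then show ?case by (intro sets.Diff torus_borel)
next
  case (Union a) then show ?case by (intro sets.countable_UN') auto
qed

context setting begin

lemma G_const: "good (\<lambda>x. c)"
  by (rule G_cper) (simp add: cper_def continuous_on_const)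

lemma G_ind_pos:
  assumes cp: "cper \<phi>"
  shows "good (indicator {x\<in>torus. 0 < \<phi> x})"
proof -
  define \<psi> where "\<psi> n x = min 1 (real n * max 0 (\<phi> x))" for n x
  have c: "continuous_on UNIV \<phi>" and per: "\<forall>x i. \<phi> (x + axis i 1) = \<phi> x" using cp unfolding cper_def by blast+
  have cps: "cper (\<psi> n)" for n
    unfolding cper_def \<psi>_def using per
    by (auto intro!: continuous_on_min continuous_on_mult continuous_on_max continuous_on_const c)
  have [measurable]: "\<phi> \<in> borel_measurable borel" by (rule cper_borel[OF cp])
  show ?thesis
  proof (rule G_lim[where \<rho>s=\<psi> and B=1])
    show "good (\<psi> n)" for n by (rule G_cper[OF cps])
    show "indicator {x\<in>torus. 0 < \<phi> x} \<in> borel_measurable borel" by measurable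
    show "\<forall>x\<in>torus. \<bar>\<psi> n x\<bar> \<le> 1" for n unfolding \<psi>_def by auto
    fix x :: "real^'d" assume x: "x \<in> torus"
    show "(\<lambda>n. \<psi> n x) \<longlonglongrightarrow> indicator {x\<in>torus. 0 < \<phi> x} x"
    proof (cases "0 < \<phi> x")
      case True
      obtain N :: nat where N: "1 / \<phi> x < real N" using reals_Archimedean2 by blast
      have "\<forall>n\<ge>N. \<psi> n x = 1"
      proof (intro allI impI)
        fix n assume "N \<le> n"
        then have "1 / \<phi> x < real n" using N by linarith
        then have "1 < real n * \<phi> x" using True by (simp add: field_simps)
        then show "\<psi> n x = 1" unfolding \<psi>_def using True by simp
      qed
      then have "eventually (\<lambda>n. \<psi> n x = 1) sequentially" by (auto simp: eventually_sequentially)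
      then have "(\<lambda>n. \<psi> n x) \<longlonglongrightarrow> 1" by (rule tendsto_eventually)
      then show ?thesis using True x by simp
    next
      case False
      then have "\<psi> n x = 0" for n unfolding \<psi>_def by simp
      then show ?thesis using False by simp
    qed
  qed
qed

lemma G_sets:
  assumes "A \<in> sigma_sets torus Gen"
  shows "good (indicator A :: real^'d \<Rightarrow> real)"
  using Gen_Int Gen_Pow assms
proof (induct rule: sigma_sets_induct_disjoint)
  case (basic A)
  then obtain \<phi> where a: "A = {x\<in>torus. 0 < \<phi> x}" "cper \<phi>" unfolding Gen_def by blast
  show ?case unfolding a(1) by (rule G_ind_pos[OF a(2)])
next
  case empty
  have "(indicator {} :: real^'d \<Rightarrow> real) = (\<lambda>x. 0)" by (rule ext) simp
  then show ?case using G_const by simp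
next
  case (compl A)
  have "good (\<lambda>x. 1 * 1 + (-1) * indicator A x)" by (rule G_lin[OF G_const compl(2)])
  moreover have "indicator (torus - A) \<in> borel_measurable borel"
    using Gen_borel[OF compl(1)] by measurable
  moreover have "\<forall>x\<in>torus. indicator (torus - A) x = 1 * 1 + (-1) * (indicator A x :: real)"
    by (auto simp: indicator_def)
  ultimately show ?case by (rule G_cong)
next
  case (union A)
  define S where "S n x = (\<Sum>i<n. indicator (A i) x :: real)" for n x
  have gS: "good (S n)" for n
  proof (induct n)
    case 0
    have "S 0 = (\<lambda>x. 0)" unfolding S_def by (rule ext) simp
    then show ?case using G_const by simp
  next
    case (Suc n)
    have "good (\<lambda>x. 1 * S n x + 1 * indicator (A n) x)" by (rule G_lin[OF Suc union(3)])
    moreover have "S (Suc n) = (\<lambda>x. 1 * S n x + 1 * indicator (A n) x)" unfolding S_def by (rule ext) simp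
    ultimately show ?case by simp
  qed
  have disj: "\<And>i j. i \<noteq> j \<Longrightarrow> A i \<inter> A j = {}" using union(1) unfolding disjoint_family_on_def by blast
  have sums: "(\<lambda>i. indicator (A i) x :: real) sums indicator (\<Union>i. A i) x" for x by (rule indicator_sums[OF disj])
  show ?case
  proof (rule G_lim[where \<rho>s=S and B=1])
    show "good (S n)" for n by (rule gS)
    have "(\<Union>i. A i) \<in> sigma_sets torus Gen" using union(2) by (intro sigma_sets.Union) auto
    then have "(\<Union>i. A i) \<in> sets borel" by (rule Gen_borel)
    then show "indicator (\<Union>i. A i) \<in> borel_measurable borel" by measurable
    show "\<forall>x\<in>torus. \<bar>S n x\<bar> \<le> 1" for n
    proof
      fix x :: "real^'d"
      have "0 \<le> S n x" unfolding S_def by (intro sum_nonneg) simp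
      moreover have "S n x \<le> (\<Sum>i. indicator (A i) x :: real)" unfolding S_def
        by (rule sum_le_suminf[OF sums_summable[OF sums]]) auto
      moreover have "(\<Sum>i. indicator (A i) x :: real) \<le> 1"
      proof -
        have "(\<Sum>i. indicator (A i) x :: real) = indicator (\<Union>i. A i) x" by (rule sums_unique[OF sums, symmetric])
        also have "\<dots> \<le> 1" by (rule indicator_le_1)
        finally show ?thesis .
      qed
      ultimately show "\<bar>S n x\<bar> \<le> 1" by simp
    qed
    fix x :: "real^'d"
    show "(\<lambda>n. S n x) \<longlonglongrightarrow> indicator (\<Union>i. A i) x"
      using sums[of x] unfolding sums_def S_def .
  qed
qed

end


lemma floor_approx:
  fixes y :: real
  shows "(\<lambda>n. real_of_int \<lfloor>real (Suc n) * y\<rfloor> / real (Suc n)) \<longlonglongrightarrow> y"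
proof (rule LIMSEQ_I)
  fix r :: real assume r: "0 < r"
  obtain N :: nat where N: "1 / r < real N" using reals_Archimedean2 by blast
  have "norm (real_of_int \<lfloor>real (Suc n) * y\<rfloor> / real (Suc n) - y) < r" if n: "n \<ge> N" for n
  proof -
    define m where "m = real (Suc n)"
    have m0: "m > 0" unfolding m_def by simp
    have f1: "real_of_int \<lfloor>m * y\<rfloor> \<le> m * y" by (rule of_int_floor_le)
    have f2: "m * y - 1 < real_of_int \<lfloor>m * y\<rfloor>" by (rule floor_correct[THEN conjunct1, THEN less_le_trans[rotated]]) (simp add: floor_less_iff)
    have "real_of_int \<lfloor>m * y\<rfloor> / m - y = (real_of_int \<lfloor>m * y\<rfloor> - m * y) / m" using m0 by (simp add: field_simps)
    then have e: "\<bar>real_of_int \<lfloor>m * y\<rfloor> / m - y\<bar> = \<bar>real_of_int \<lfloor>m * y\<rfloor> - m * y\<bar> / m" using m0 by simp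
    have "\<bar>real_of_int \<lfloor>m * y\<rfloor> - m * y\<bar> < 1" using f1 f2 by linarith
    then have "\<bar>real_of_int \<lfloor>m * y\<rfloor> - m * y\<bar> / m < 1 / m" using m0 by (simp add: divide_strict_right_mono)
    also have "1 / m < r"
    proof -
      have "1 / r < m" using N n unfolding m_def by simp
      then show ?thesis using r m0 by (simp add: field_simps)
    qed
    finally show ?thesis using e unfolding m_def by simp
  qed
  then show "\<exists>no. \<forall>n\<ge>no. norm (real_of_int \<lfloor>real (Suc n) * y\<rfloor> / real (Suc n) - y) < r" by blast
qed

context setting begin

lemma G_sum:
  assumes "finite K" "\<And>k. k \<in> K \<Longrightarrow> good (f k)"
  shows "good (\<lambda>x. \<Sum>k\<in>K. c k * f k x)"
  using assms
proof (induct K rule: finite_induct)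
  case empty
  have "(\<lambda>x. \<Sum>k\<in>{}. c k * f k x) = (\<lambda>x. 0)" by (rule ext) simp
  then show ?case using G_const by simp
next
  case (insert k F)
  have "good (\<lambda>x. c k * f k x + 1 * (\<Sum>k\<in>F. c k * f k x))"
    by (rule G_lin) (use insert in auto)
  moreover have "(\<lambda>x. \<Sum>k\<in>insert k F. c k * f k x) = (\<lambda>x. c k * f k x + 1 * (\<Sum>k\<in>F. c k * f k x))"
    using insert by (intro ext) simp
  ultimately show ?case by simp
qed

lemma G_bounded:
  fixes \<rho> :: "real^'d \<Rightarrow> real"
  assumes rb: "\<rho> \<in> borel_measurable borel" and B: "\<forall>x\<in>torus. \<bar>\<rho> x\<bar> \<le> B"
  shows "good \<rho>"
proof -
  define S where "S n k = {x\<in>torus. \<lfloor>real (Suc n) * \<rho> x\<rfloor> = k}" for n k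
  define M where "M n = \<lceil>real (Suc n) * B\<rceil> + 1" for n
  define \<rho>s where "\<rho>s n x = (\<Sum>k\<in>{-M n..M n}. (real_of_int k / real (Suc n)) * indicator (S n k) x)" for n x
  have [measurable]: "\<rho> \<in> borel_measurable borel" by (rule rb)
  have Sg: "good (indicator (S n k))" for n k
  proof (rule G_sets)
    have Sb: "{x. \<lfloor>real (Suc n) * \<rho> x\<rfloor> = k} \<in> sets borel" by measurable
    have Seq: "S n k = torus \<inter> {x. \<lfloor>real (Suc n) * \<rho> x\<rfloor> = k}" unfolding S_def by blast
    have "S n k \<in> (\<inter>) torus ` sets borel" by (rule image_eqI[where f="(\<inter>) torus", OF Seq Sb])
    then have "S n k \<in> sets (restrict_space borel torus)" by (simp only: sets_restrict_space)
    then show "S n k \<in> sigma_sets torus Gen" using sets_restrict_sub by blast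
  qed
  have gs: "good (\<rho>s n)" for n
    unfolding \<rho>s_def[abs_def]
    by (rule G_sum[of "{-M n..M n}" "\<lambda>k. indicator (S n k)" "\<lambda>k. real_of_int k / real (Suc n)"]) (simp_all add: Sg)
  have eq: "\<rho>s n x = real_of_int \<lfloor>real (Suc n) * \<rho> x\<rfloor> / real (Suc n)" if x: "x \<in> torus" for n x
  proof -
    define m where "m = real (Suc n)"
    have m0: "m > 0" unfolding m_def by simp
    define fl where "fl = \<lfloor>m * \<rho> x\<rfloor>"
    have bx: "\<bar>\<rho> x\<bar> \<le> B" using B x by blast
    have r1: "\<rho> x \<le> B" "-B \<le> \<rho> x" using bx by linarith+
    have "m * \<rho> x \<le> m * B" using r1(1) m0 by (intro mult_left_mono) auto
    moreover have "- (m * B) \<le> m * \<rho> x"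
    proof -
      have "m * (-B) \<le> m * \<rho> x" using r1(2) m0 by (intro mult_left_mono) auto
      then show ?thesis by simp
    qed
    moreover have "real_of_int fl \<le> m * \<rho> x" unfolding fl_def by (rule of_int_floor_le)
    moreover have "m * \<rho> x - 1 < real_of_int fl" unfolding fl_def by linarith
    moreover have "m * B \<le> real_of_int \<lceil>m * B\<rceil>" by (rule le_of_int_ceiling)
    moreover have "real_of_int (M n) = real_of_int \<lceil>m * B\<rceil> + 1" unfolding M_def m_def by simp
    ultimately have "real_of_int fl \<le> real_of_int (M n)" "real_of_int (- M n) \<le> real_of_int fl"
      by linarith+
    then have flin: "fl \<in> {-M n..M n}" by simp
    have "\<rho>s n x = (\<Sum>k\<in>{-M n..M n}. if fl = k then real_of_int k / m else 0)"
      unfolding \<rho>s_def S_def fl_def m_def using x by (intro sum.cong) (auto simp: indicator_def)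
    also have "\<dots> = real_of_int fl / m" using flin by (simp add: sum.delta)
    finally show ?thesis unfolding fl_def m_def .
  qed
  show ?thesis
  proof (rule G_lim[where \<rho>s=\<rho>s and B="B+1"])
    show "good (\<rho>s n)" for n by (rule gs)
    show "\<rho> \<in> borel_measurable borel" by (rule rb)
    show "\<forall>x\<in>torus. \<bar>\<rho>s n x\<bar> \<le> B + 1" for n
    proof
      fix x :: "real^'d" assume x: "x \<in> torus"
      define m where "m = real (Suc n)"
      have m0: "m \<ge> 1" unfolding m_def by simp
      have bx: "\<bar>\<rho> x\<bar> \<le> B" using B x by blast
      have f1: "real_of_int \<lfloor>m * \<rho> x\<rfloor> \<le> m * \<rho> x" by (rule of_int_floor_le)
      have f2: "m * \<rho> x - 1 < real_of_int \<lfloor>m * \<rho> x\<rfloor>" by linarith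
      have "\<bar>real_of_int \<lfloor>m * \<rho> x\<rfloor> - m * \<rho> x\<bar> \<le> 1" using f1 f2 by linarith
      moreover have "real_of_int \<lfloor>m * \<rho> x\<rfloor> / m - \<rho> x = (real_of_int \<lfloor>m * \<rho> x\<rfloor> - m * \<rho> x) / m"
        using m0 by (simp add: field_simps)
      ultimately have "\<bar>real_of_int \<lfloor>m * \<rho> x\<rfloor> / m - \<rho> x\<bar> \<le> 1 / m"
        using m0 by (simp add: divide_right_mono)
      also have "1 / m \<le> 1" using m0 by simp
      finally have "\<bar>real_of_int \<lfloor>m * \<rho> x\<rfloor> / m - \<rho> x\<bar> \<le> 1" .
      then have "\<bar>real_of_int \<lfloor>m * \<rho> x\<rfloor> / m\<bar> \<le> B + 1" using bx by linarith
      then show "\<bar>\<rho>s n x\<bar> \<le> B + 1" using eq[OF x] unfolding m_def by simp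
    qed
    fix x :: "real^'d" assume x: "x \<in> torus"
    show "(\<lambda>n. \<rho>s n x) \<longlonglongrightarrow> \<rho> x"
      using floor_approx[of "\<rho> x"] eq[OF x] by simp
  qed
qed

end


theorem theorem3p3:
  fixes \<Psi> :: "nat \<Rightarrow> real ^ 'd \<Rightarrow> real ^ 'd"
    and j :: "nat \<Rightarrow> nat"
    and \<nu> :: "real ^ 'd \<Rightarrow> (real ^ 'd) measure"
  assumes d2: "CARD('d) \<ge> 2"
    and mpb: "\<And>n. measure_preserving_bij (\<Psi> n)"
    and subseq: "strict_mono j"
    and nu_sets: "\<And>x. x \<in> torus \<Longrightarrow> sets (\<nu> x) = sets (restrict_space borel torus)"
    and nu_prob: "AE x in torus_measure. prob_space (\<nu> x)"
    and conv_cont: "\<And>\<rho>. torus_continuous \<rho> \<Longrightarrow>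
                      weak_L2_conv (\<lambda>k. \<rho> \<circ> \<Psi> (j k)) (young_pair \<nu> \<rho>)"
  shows "\<forall>\<rho>. \<rho> \<in> borel_measurable borel \<longrightarrow> (\<exists>B. \<forall>x\<in>torus. \<bar>\<rho> x\<bar> \<le> B) \<longrightarrow>
           weak_L2_conv (\<lambda>k. \<rho> \<circ> \<Psi> (j k)) (young_pair \<nu> \<rho>)"
proof (intro allI impI)
  fix \<rho> :: "real^'d \<Rightarrow> real"
  assume rb: "\<rho> \<in> borel_measurable borel" and "\<exists>B. \<forall>x\<in>torus. \<bar>\<rho> x\<bar> \<le> B"
  then obtain B where B: "\<forall>x\<in>torus. \<bar>\<rho> x\<bar> \<le> B" by blast
  interpret S: setting \<Psi> j \<nu>
  proof
    show "\<And>n. measure_preserving_bij (\<Psi> n)" by (rule mpb)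
    show "\<And>x. x \<in> torus \<Longrightarrow> sets (\<nu> x) = sets (restrict_space borel torus)" by (rule nu_sets)
    show "AE x in torus_measure. prob_space (\<nu> x)" by (rule nu_prob)
    show "\<And>\<rho>. torus_continuous \<rho> \<Longrightarrow> weak_L2_conv (\<lambda>k. \<rho> \<circ> \<Psi> (j k)) (young_pair \<nu> \<rho>)"
      by (rule conv_cont)
  qed
  show "weak_L2_conv (\<lambda>k. \<rho> \<circ> \<Psi> (j k)) (young_pair \<nu> \<rho>)"
    by (rule S.G_final[OF S.G_bounded[OF rb B]])
qed

end
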